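(* Let $M$ be a monoid with identity $1$. Then $\sigma_m^*(M)<\sigma_m(M)$ if and only if $M-\{1\}$ is a subsemigroup of $M$ which is a group and $\sigma_s(M-\{1\})>2$. Moreover, if $\sigma_m^*(M)<\sigma_m(M)$, then $\sigma_m^*(M)=2$.
   Context: A subsemigroup is a nonempty subset closed under the operation. For a monoid $M$: a submonoid is a subsemigroup containing the identity of $M$; a monoidal subsemigroup is a subsemigroup that is a monoid in its own right (identity possibly different from that of $M$). $\sigma_s$, $\sigma_m$, $\sigma_m^*$ denote the least positive integer $n$ such that the structure is the union of $n$ proper subsemigroups, proper submonoids, respectively proper monoidal subsemigroups, or $\infty$ if no such finite $n$ exists (with the convention that $\infty<\infty$ is false). *)

theory Defs
  imports "HOL-Algebra.Group" "HOL-Library.Extended_Nat"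
begin

definition subsemigroup :: "'a set \<Rightarrow> ('a, 'b) monoid_scheme \<Rightarrow> bool" where
  "subsemigroup H G \<longleftrightarrow> H \<noteq> {} \<and> H \<subseteq> carrier G \<and>
     (\<forall>x\<in>H. \<forall>y\<in>H. x \<otimes>\<^bsub>G\<^esub> y \<in> H)"

text \<open>A monoidal subsemigroup: a subsemigroup which is a monoid in its own right
  (with some identity e, possibly different from the identity of G).\<close>
definition monoidal_subsemigroup :: "'a set \<Rightarrow> ('a, 'b) monoid_scheme \<Rightarrow> bool" where
  "monoidal_subsemigroup H G \<longleftrightarrow> subsemigroup H G \<and>
     (\<exists>e\<in>H. \<forall>x\<in>H. e \<otimes>\<^bsub>G\<^esub> x = x \<and> x \<otimes>\<^bsub>G\<^esub> e = x)"

text \<open>Covering number: least positive n such that S is the union of n proper subsets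
  of S having property P; \<infinity> if there is no such finite n (Inf {} = \<infinity> in enat).\<close>
definition cover_num :: "'a set \<Rightarrow> ('a set \<Rightarrow> bool) \<Rightarrow> enat" where
  "cover_num S P = Inf {enat (card \<A>) | \<A>. finite \<A> \<and> \<A> \<noteq> {} \<and>
      (\<forall>A\<in>\<A>. P A \<and> A \<subseteq> S \<and> A \<noteq> S) \<and> \<Union>\<A> = S}"

definition sigma_s :: "('a, 'b) monoid_scheme \<Rightarrow> 'a set \<Rightarrow> enat" where
  "sigma_s G S = cover_num S (\<lambda>A. subsemigroup A G)"

definition sigma_m :: "('a, 'b) monoid_scheme \<Rightarrow> enat" where
  "sigma_m G = cover_num (carrier G) (\<lambda>A. submonoid A G)"

definition sigma_m_star :: "('a, 'b) monoid_scheme \<Rightarrow> enat" where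
  "sigma_m_star G = cover_num (carrier G) (\<lambda>A. monoidal_subsemigroup A G)"

end

theory Submission
  imports Defs
begin

lemma cover_le:
  assumes "finite A" "A \<noteq> {}" "\<forall>X\<in>A. P X \<and> X \<subseteq> S \<and> X \<noteq> S" "\<Union>A = S"
  shows "cover_num S P \<le> enat (card A)"
  unfolding cover_num_def using assms by (intro Inf_lower) blast

lemma cover_less:
  assumes "cover_num S P < x"
  obtains A where "finite A" "A \<noteq> {}" "\<forall>X\<in>A. P X \<and> X \<subseteq> S \<and> X \<noteq> S" "\<Union>A = S"
    "enat (card A) < x"
  using assms unfolding cover_num_def Inf_less_iff by blast

lemma cover_ge2: "2 \<le> cover_num S P"
  unfolding cover_num_def
proof (rule Inf_greatest)
  fix x assume "x \<in> {enat (card \<A>) | \<A>. finite \<A> \<and> \<A> \<noteq> {} \<and>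
      (\<forall>A\<in>\<A>. P A \<and> A \<subseteq> S \<and> A \<noteq> S) \<and> \<Union>\<A> = S}"
  then obtain A where x: "x = enat (card A)" and A: "finite A" "A \<noteq> {}" "\<forall>X\<in>A. P X \<and> X \<subseteq> S \<and> X \<noteq> S" "\<Union>A = S" by blast
  have "card A \<noteq> 0" using A by simp
  moreover have "card A \<noteq> 1"
  proof
    assume "card A = 1" then obtain X where "A = {X}" by (metis card_1_singletonE)
    with A show False by auto
  qed
  ultimately have "2 \<le> card A" by arith
  thus "2 \<le> x" by (simp add: numeral_eq_enat x)
qed

theorem mainTheorem20:
  fixes M :: "('a, 'b) monoid_scheme"
  assumes "monoid M"
  shows "(sigma_m_star M < sigma_m M \<longleftrightarrow>
            subsemigroup (carrier M - {\<one>\<^bsub>M\<^esub>}) M \<and>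
            (\<exists>e. group (M\<lparr>carrier := carrier M - {\<one>\<^bsub>M\<^esub>}, one := e\<rparr>)) \<and>
            sigma_s M (carrier M - {\<one>\<^bsub>M\<^esub>}) > 2)
       \<and> (sigma_m_star M < sigma_m M \<longrightarrow> sigma_m_star M = 2)"
proof -
  interpret monoid M by fact
  define T where "T = carrier M - {\<one>\<^bsub>M\<^esub>}"
  have ge2: "2 \<le> sigma_m_star M" unfolding sigma_m_star_def by (rule cover_ge2)
  have le1: "sigma_m M \<le> sigma_s M T"
    unfolding sigma_s_def cover_num_def
  proof (rule Inf_greatest)
    fix x assume "x \<in> {enat (card \<A>) | \<A>. finite \<A> \<and> \<A> \<noteq> {} \<and>
      (\<forall>A\<in>\<A>. subsemigroup A M \<and> A \<subseteq> T \<and> A \<noteq> T) \<and> \<Union>\<A> = T}"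
    then obtain B where x: "x = enat (card B)" and B: "finite B" "B \<noteq> {}" "\<forall>X\<in>B. subsemigroup X M \<and> X \<subseteq> T \<and> X \<noteq> T" "\<Union>B = T" by blast
    have "sigma_m M \<le> enat (card (insert \<one>\<^bsub>M\<^esub> ` B))"
      unfolding sigma_m_def
    proof (rule cover_le)
      show "finite (insert \<one>\<^bsub>M\<^esub> ` B)" "insert \<one>\<^bsub>M\<^esub> ` B \<noteq> {}" using B by auto
      show "\<Union> (insert \<one>\<^bsub>M\<^esub> ` B) = carrier M" using B(2,4) by (auto simp: T_def)
      show "\<forall>X\<in>insert \<one>\<^bsub>M\<^esub> ` B. submonoid X M \<and> X \<subseteq> carrier M \<and> X \<noteq> carrier M"
      proof (intro ballI)
        fix X0 assume "X0 \<in> insert \<one>\<^bsub>M\<^esub> ` B"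
        then obtain X where X: "X \<in> B" and X0: "X0 = insert \<one>\<^bsub>M\<^esub> X" by blast
        hence s: "subsemigroup X M" "X \<subseteq> T" "X \<noteq> T" using B by auto
        have c1: "submonoid (insert \<one>\<^bsub>M\<^esub> X) M"
          by (rule submonoid.intro) (use s in \<open>auto simp: subsemigroup_def T_def\<close>)
        have c2: "insert \<one>\<^bsub>M\<^esub> X \<subseteq> carrier M" using s by (auto simp: T_def)
        have c3: "insert \<one>\<^bsub>M\<^esub> X \<noteq> carrier M"
        proof
          assume "insert \<one>\<^bsub>M\<^esub> X = carrier M"
          hence "X = T" using s(2) by (auto simp: T_def)
          with s show False by simp
        qed
        from c1 c2 c3 show "submonoid X0 M \<and> X0 \<subseteq> carrier M \<and> X0 \<noteq> carrier M" unfolding X0 by blast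
      qed
    qed
    also have "\<dots> \<le> enat (card B)" using card_image_le[OF B(1)] by simp
    finally show "sigma_m M \<le> x" using x by simp
  qed
  have le2: "sigma_s M T \<le> sigma_m M" if sT: "subsemigroup T M"
    unfolding sigma_m_def cover_num_def
  proof (rule Inf_greatest)
    fix x assume "x \<in> {enat (card \<A>) | \<A>. finite \<A> \<and> \<A> \<noteq> {} \<and>
      (\<forall>A\<in>\<A>. submonoid A M \<and> A \<subseteq> carrier M \<and> A \<noteq> carrier M) \<and> \<Union>\<A> = carrier M}"
    then obtain A where x: "x = enat (card A)" and A: "finite A" "A \<noteq> {}" "\<forall>X\<in>A. submonoid X M \<and> X \<subseteq> carrier M \<and> X \<noteq> carrier M"
      "\<Union>A = carrier M" by blast
    let ?B = "(\<lambda>X. X - {\<one>\<^bsub>M\<^esub>}) ` (A - {{\<one>\<^bsub>M\<^esub>}})"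
    have "sigma_s M T \<le> enat (card ?B)"
      unfolding sigma_s_def
    proof (rule cover_le)
      show "finite ?B" using A(1) by simp
      show U: "\<Union> ?B = T"
      proof
        show "\<Union> ?B \<subseteq> T" using A(3) by (auto simp: T_def)
        show "T \<subseteq> \<Union> ?B"
        proof
          fix y assume "y \<in> T"
          then have y: "y \<in> carrier M" "y \<noteq> \<one>\<^bsub>M\<^esub>" by (auto simp: T_def)
          then obtain X where "X \<in> A" "y \<in> X" using A(4) by blast
          then show "y \<in> \<Union> ?B" using y(2) by blast
        qed
      qed
      have "T \<noteq> {}" using sT by (simp add: subsemigroup_def)
      with U show "?B \<noteq> {}" by (metis Union_empty)
      show "\<forall>X\<in>?B. subsemigroup X M \<and> X \<subseteq> T \<and> X \<noteq> T"
      proof (intro ballI)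
        fix X0 assume "X0 \<in> ?B"
        then obtain X where X: "X \<in> A" "X \<noteq> {\<one>\<^bsub>M\<^esub>}" and X0: "X0 = X - {\<one>\<^bsub>M\<^esub>}" by blast
        hence s: "submonoid X M" "X \<subseteq> carrier M" "X \<noteq> carrier M" using A by auto
        have "\<one>\<^bsub>M\<^esub> \<in> X" using s(1) submonoid.one_closed by blast
        have c1: "subsemigroup (X - {\<one>\<^bsub>M\<^esub>}) M"
          unfolding subsemigroup_def
        proof (intro conjI ballI)
          show "X - {\<one>\<^bsub>M\<^esub>} \<noteq> {}" using X(2) \<open>\<one>\<^bsub>M\<^esub> \<in> X\<close> by auto
          show "X - {\<one>\<^bsub>M\<^esub>} \<subseteq> carrier M" using s by auto
          fix x y assume xy: "x \<in> X - {\<one>\<^bsub>M\<^esub>}" "y \<in> X - {\<one>\<^bsub>M\<^esub>}"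
          have 1: "x \<otimes>\<^bsub>M\<^esub> y \<in> X" using xy s(1) by (simp add: submonoid.m_closed)
          have "x \<in> T" "y \<in> T" using xy s(2) by (auto simp: T_def)
          hence "x \<otimes>\<^bsub>M\<^esub> y \<in> T" using sT by (simp add: subsemigroup_def)
          with 1 show "x \<otimes>\<^bsub>M\<^esub> y \<in> X - {\<one>\<^bsub>M\<^esub>}" by (simp add: T_def)
        qed
        have c2: "X - {\<one>\<^bsub>M\<^esub>} \<subseteq> T" using s by (auto simp: T_def)
        have c3: "X - {\<one>\<^bsub>M\<^esub>} \<noteq> T"
        proof
          assume "X - {\<one>\<^bsub>M\<^esub>} = T"
          hence "X = carrier M" using \<open>\<one>\<^bsub>M\<^esub> \<in> X\<close> s(2) by (auto simp: T_def)
          with s show False by simp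
        qed
        from c1 c2 c3 show "subsemigroup X0 M \<and> X0 \<subseteq> T \<and> X0 \<noteq> T" unfolding X0 by blast
      qed
    qed
    also have "\<dots> \<le> enat (card A)"
    proof -
      have "card ?B \<le> card (A - {{\<one>\<^bsub>M\<^esub>}})" by (rule card_image_le) (simp add: A(1))
      also have "\<dots> \<le> card A" by (rule card_mono) (auto simp: A(1))
      finally show ?thesis by simp
    qed
    finally show "sigma_s M T \<le> x" using x by simp
  qed
  have bwd: "sigma_m_star M \<le> 2" if sT: "subsemigroup T M" and
    g: "\<exists>e. group (M\<lparr>carrier := T, one := e\<rparr>)"
  proof -
    obtain e where ge: "group (M\<lparr>carrier := T, one := e\<rparr>)" using g by blast
    interpret G: group "M\<lparr>carrier := T, one := e\<rparr>" by (rule ge)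
    have eT: "e \<in> T" using G.one_closed by simp
    have eid: "\<forall>x\<in>T. e \<otimes>\<^bsub>M\<^esub> x = x \<and> x \<otimes>\<^bsub>M\<^esub> e = x" using G.l_one G.r_one by simp
    have "T \<noteq> {}" using eT by auto
    have c: "sigma_m_star M \<le> enat (card {{\<one>\<^bsub>M\<^esub>}, T})"
      unfolding sigma_m_star_def
    proof (rule cover_le)
      show "finite {{\<one>\<^bsub>M\<^esub>}, T}" "{{\<one>\<^bsub>M\<^esub>}, T} \<noteq> {}" by auto
      show "\<Union> {{\<one>\<^bsub>M\<^esub>}, T} = carrier M" by (auto simp: T_def)
      show "\<forall>X\<in>{{\<one>\<^bsub>M\<^esub>}, T}. monoidal_subsemigroup X M \<and> X \<subseteq> carrier M \<and> X \<noteq> carrier M"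
        using sT eT eid \<open>T \<noteq> {}\<close>
        by (auto simp: monoidal_subsemigroup_def subsemigroup_def T_def)
    qed
    have "{\<one>\<^bsub>M\<^esub>} \<noteq> T" by (auto simp: T_def)
    hence "card {{\<one>\<^bsub>M\<^esub>}, T} = 2" by simp
    with c show ?thesis by (simp add: numeral_eq_enat)
  qed
  have fwd: "subsemigroup T M \<and> (\<exists>e. group (M\<lparr>carrier := T, one := e\<rparr>)) \<and> 2 < sigma_s M T"
    if lt: "sigma_m_star M < sigma_m M"
  proof -
    obtain A where A: "finite A" "A \<noteq> {}"
      "\<forall>X\<in>A. monoidal_subsemigroup X M \<and> X \<subseteq> carrier M \<and> X \<noteq> carrier M"
      "\<Union>A = carrier M" "enat (card A) < sigma_m M"
      using cover_less[of "carrier M" "\<lambda>A. monoidal_subsemigroup A M" "sigma_m M"] lt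
      unfolding sigma_m_star_def by blast
    have TA: "T \<in> A"
    proof (rule ccontr)
      assume nT: "T \<notin> A"
      have "sigma_m M \<le> enat (card (insert \<one>\<^bsub>M\<^esub> ` A))"
        unfolding sigma_m_def
      proof (rule cover_le)
        show "finite (insert \<one>\<^bsub>M\<^esub> ` A)" "insert \<one>\<^bsub>M\<^esub> ` A \<noteq> {}" using A by auto
        show "\<Union> (insert \<one>\<^bsub>M\<^esub> ` A) = carrier M" using A(2,4) by auto
        show "\<forall>X\<in>insert \<one>\<^bsub>M\<^esub> ` A. submonoid X M \<and> X \<subseteq> carrier M \<and> X \<noteq> carrier M"
        proof (intro ballI)
          fix X0 assume "X0 \<in> insert \<one>\<^bsub>M\<^esub> ` A"
          then obtain X where X: "X \<in> A" and X0: "X0 = insert \<one>\<^bsub>M\<^esub> X" by blast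
          hence s: "subsemigroup X M" "X \<subseteq> carrier M" "X \<noteq> carrier M" "X \<noteq> T"
            using A nT by (auto simp: monoidal_subsemigroup_def)
          have c1: "submonoid (insert \<one>\<^bsub>M\<^esub> X) M"
            by (rule submonoid.intro) (use s in \<open>auto simp: subsemigroup_def\<close>)
          have c2: "insert \<one>\<^bsub>M\<^esub> X \<subseteq> carrier M" using s by auto
          have c3: "insert \<one>\<^bsub>M\<^esub> X \<noteq> carrier M"
          proof
            assume "insert \<one>\<^bsub>M\<^esub> X = carrier M"
            hence "X = T \<or> X = carrier M" using s(2) unfolding T_def
              by (cases "\<one>\<^bsub>M\<^esub> \<in> X") (auto simp: insert_absorb)
            with s show False by simp
          qed
          from c1 c2 c3 show "submonoid X0 M \<and> X0 \<subseteq> carrier M \<and> X0 \<noteq> carrier M" unfolding X0 by blast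
        qed
      qed
      also have "\<dots> \<le> enat (card A)" using card_image_le[OF A(1)] by simp
      finally show False using A(5) by simp
    qed
    hence mT: "monoidal_subsemigroup T M" using A by auto
    then obtain e where eT: "e \<in> T" and eid: "\<forall>x\<in>T. e \<otimes>\<^bsub>M\<^esub> x = x \<and> x \<otimes>\<^bsub>M\<^esub> e = x"
      and sT: "subsemigroup T M"
      unfolding monoidal_subsemigroup_def by blast
    have cl: "\<And>x y. x \<in> T \<Longrightarrow> y \<in> T \<Longrightarrow> x \<otimes>\<^bsub>M\<^esub> y \<in> T" using sT by (auto simp: subsemigroup_def)
    have TM: "T \<subseteq> carrier M" by (auto simp: T_def)
    have s2: "2 < sigma_s M T" using ge2 lt le1 by (meson order.strict_trans1 order.strict_trans2)
    have "\<forall>x\<in>T. \<exists>y\<in>T. y \<otimes>\<^bsub>M\<^esub> x = e"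
    proof (rule ccontr)
      assume nall: "\<not> (\<forall>x\<in>T. \<exists>y\<in>T. y \<otimes>\<^bsub>M\<^esub> x = e)"
      define L where "L = {x\<in>T. \<exists>y\<in>T. y \<otimes>\<^bsub>M\<^esub> x = e}"
      have eL: "e \<in> L" using eT eid by (auto simp: L_def)
      have LT: "L \<noteq> T" using nall by (auto simp: L_def)
      have "sigma_s M T \<le> enat (card {L, T - L})"
        unfolding sigma_s_def
      proof (rule cover_le)
        show "finite {L, T - L}" "{L, T - L} \<noteq> {}" by auto
        show "\<Union> {L, T - L} = T" by (auto simp: L_def)
        have sL: "subsemigroup L M"
          unfolding subsemigroup_def
        proof (intro conjI ballI)
          show "L \<noteq> {}" using eL by auto
          show "L \<subseteq> carrier M" using TM by (auto simp: L_def)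
          fix x x' assume "x \<in> L" "x' \<in> L"
          then obtain y y' where xy: "x \<in> T" "y \<in> T" "y \<otimes>\<^bsub>M\<^esub> x = e" "x' \<in> T" "y' \<in> T" "y' \<otimes>\<^bsub>M\<^esub> x' = e"
            by (auto simp: L_def)
          have C: "x \<in> carrier M" "y \<in> carrier M" "x' \<in> carrier M" "y' \<in> carrier M"
            using xy TM by auto
          have "(y' \<otimes>\<^bsub>M\<^esub> y) \<otimes>\<^bsub>M\<^esub> (x \<otimes>\<^bsub>M\<^esub> x') = y' \<otimes>\<^bsub>M\<^esub> ((y \<otimes>\<^bsub>M\<^esub> x) \<otimes>\<^bsub>M\<^esub> x')"
            using C by (simp add: m_assoc)
          also have "\<dots> = e" using xy eid by simp
          finally show "x \<otimes>\<^bsub>M\<^esub> x' \<in> L" using cl xy by (auto simp: L_def)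
        qed
        have sTL: "subsemigroup (T - L) M"
          unfolding subsemigroup_def
        proof (intro conjI ballI)
          show "T - L \<noteq> {}" using LT by (auto simp: L_def)
          show "T - L \<subseteq> carrier M" using TM by auto
          fix t s assume ts: "t \<in> T - L" "s \<in> T - L"
          show "t \<otimes>\<^bsub>M\<^esub> s \<in> T - L"
          proof
            show "t \<otimes>\<^bsub>M\<^esub> s \<in> T" using ts cl by auto
            show "t \<otimes>\<^bsub>M\<^esub> s \<notin> L"
            proof
              assume "t \<otimes>\<^bsub>M\<^esub> s \<in> L"
              then obtain y where y: "y \<in> T" "y \<otimes>\<^bsub>M\<^esub> (t \<otimes>\<^bsub>M\<^esub> s) = e" by (auto simp: L_def)
              have "y \<in> carrier M" "t \<in> carrier M" "s \<in> carrier M" using y ts TM by auto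
              hence "(y \<otimes>\<^bsub>M\<^esub> t) \<otimes>\<^bsub>M\<^esub> s = e" using y(2) by (simp add: m_assoc)
              hence "s \<in> L" using y ts cl by (auto simp: L_def)
              with ts show False by auto
            qed
          qed
        qed
        show "\<forall>X\<in>{L, T - L}. subsemigroup X M \<and> X \<subseteq> T \<and> X \<noteq> T"
          using sL sTL LT eL by (auto simp: L_def)
      qed
      also have "\<dots> \<le> 2" by (simp add: numeral_eq_enat card_insert_le_m1)
      finally show False using s2 by simp
    qed
    hence "group (M\<lparr>carrier := T, one := e\<rparr>)"
      by (intro groupI) (use eT eid cl TM in \<open>auto simp: m_assoc subset_iff\<close>)
    with sT s2 show ?thesis by blast
  qed
  have fwd': "subsemigroup (carrier M - {\<one>\<^bsub>M\<^esub>}) M \<and>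
      (\<exists>e. group (M\<lparr>carrier := carrier M - {\<one>\<^bsub>M\<^esub>}, one := e\<rparr>)) \<and> 2 < sigma_s M (carrier M - {\<one>\<^bsub>M\<^esub>})"
    if "sigma_m_star M < sigma_m M" using fwd[OF that] by (simp add: T_def)
  have bwd': "sigma_m_star M < sigma_m M" if h: "subsemigroup (carrier M - {\<one>\<^bsub>M\<^esub>}) M \<and>
      (\<exists>e. group (M\<lparr>carrier := carrier M - {\<one>\<^bsub>M\<^esub>}, one := e\<rparr>)) \<and> 2 < sigma_s M (carrier M - {\<one>\<^bsub>M\<^esub>})"
  proof -
    have "sigma_m_star M \<le> 2" "2 < sigma_s M T" "sigma_s M T \<le> sigma_m M"
      using bwd le2 h by (auto simp: T_def)
    thus ?thesis by (meson order.strict_trans1 order.strict_trans2)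
  qed
  have eq2: "sigma_m_star M = 2" if lt: "sigma_m_star M < sigma_m M"
  proof -
    from fwd[OF lt] have "sigma_m_star M \<le> 2" using bwd by blast
    with ge2 show ?thesis by simp
  qed
  show ?thesis using fwd' bwd' eq2 by blast
qed

end
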